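(* Let $n_1,n_2\ge1$, $n=n_1n_2$, and let $R=(r_{i,j})_{i,j=0}^{n-1}$ be a Hermitian positive definite block Toeplitz matrix with $n_2\times n_2$ blocks of size $n_1\times n_1$ (i.e. $R=(R_{b-a})_{a,b=0}^{n_2-1}$, $R_m\in\mathbb{C}^{n_1\times n_1}$, $R_{-m}=R_m^H$). There is an algorithm that evaluates the generalized reflection coefficient recurrences for $R$, computing $a_{k,l},a'_{k,l},p_{k,l},q_{k,l},v_{k,l},v'_{k,l}$ for all pairs $(k,l)$ with $0\le k\le n_1-1$ and $k\le l\le n-1$ (obtaining the quantities with $k\ge n_1$ that the recurrence needs through the identities $q_{k,l}=U^{k\,\mathrm{sec}\,n_1}q_{k\bmod n_1,\,l-k\,\mathrm{sec}\,n_1}$, $v_{k,l}=v_{k\bmod n_1,\,l-k\,\mathrm{sec}\,n_1}$), using $O(n_1^3n_2^2)$ arithmetic operations.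
   Context: For integers $a\ge0$, $b>0$: $a\bmod b$ is the remainder of division of $a$ by $b$ and $a\,\mathrm{sec}\,b:=b\lfloor a/b\rfloor$. $U$ is the $n\times n$ shift matrix with $U_{i+1,i}=1$ ($0\le i\le n-2$), zeros elsewhere, $U^0=I$. Let $e_0,\dots,e_{n-1}$ be the canonical basis column vectors of $\mathbb{C}^n$. Generalized reflection coefficients of $R$: $p_{k,k}=q_{k,k}=e_k$; $v_{k,l}:=q_{k,l}^TRe_l$, $v'_{k,l}:=p_{k,l}^TRe_k$ (positive reals); and for $0\le k<l\le n-1$, recursively in $l-k$: $a_{k,l}=\dfrac{p_{k,l-1}^TRe_l}{v_{k+1,l}}$, $a'_{k,l}=\dfrac{q_{k+1,l}^TRe_k}{v'_{k,l-1}}$, $p_{k,l}=p_{k,l-1}-a_{k,l}q_{k+1,l}$, $q_{k,l}=q_{k+1,l}-a'_{k,l}p_{k,l-1}$, $v_{k,l}=v_{k+1,l}(1-a_{k,l}a'_{k,l})$, $v'_{k,l}=v'_{k,l-1}(1-a_{k,l}a'_{k,l})$. The vector $p_{k,l}$ (resp. $q_{k,l}$) has nonzero entries only in positions $k,\dots,l$. *)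

theory Defs
  imports Complex_Main
begin

text \<open>An n x n complex matrix is a function nat => nat => complex (only indices < n matter);
 a vector of C^n is a function nat => complex (only indices < n matter).\<close>

definition evec :: "nat \<Rightarrow> nat \<Rightarrow> complex" where
  "evec k = (\<lambda>i. if i = k then 1 else 0)"

definition bil :: "nat \<Rightarrow> (nat \<Rightarrow> nat \<Rightarrow> complex) \<Rightarrow> (nat \<Rightarrow> complex) \<Rightarrow> nat \<Rightarrow> complex" where
  "bil n R x j = (\<Sum>i<n. x i * R i j)"

text \<open>(U^s x), U the n x n shift matrix with U_{i+1,i} = 1\<close>
definition shiftU :: "nat \<Rightarrow> nat \<Rightarrow> (nat \<Rightarrow> complex) \<Rightarrow> nat \<Rightarrow> complex" where
  "shiftU n s x = (\<lambda>i. if s \<le> i \<and> i < n then x (i - s) else 0)"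

definition sec :: "nat \<Rightarrow> nat \<Rightarrow> nat" where
  "sec a b = b * (a div b)"

definition hermitian_mat :: "nat \<Rightarrow> (nat \<Rightarrow> nat \<Rightarrow> complex) \<Rightarrow> bool" where
  "hermitian_mat n R \<longleftrightarrow> (\<forall>i<n. \<forall>j<n. R j i = cnj (R i j))"

definition posdef_mat :: "nat \<Rightarrow> (nat \<Rightarrow> nat \<Rightarrow> complex) \<Rightarrow> bool" where
  "posdef_mat n R \<longleftrightarrow> hermitian_mat n R \<and>
     (\<forall>x::nat \<Rightarrow> complex. (\<exists>i<n. x i \<noteq> 0) \<longrightarrow>
        0 < Re (\<Sum>i<n. \<Sum>j<n. cnj (x i) * R i j * x j))"

definition block_toeplitz :: "nat \<Rightarrow> nat \<Rightarrow> (nat \<Rightarrow> nat \<Rightarrow> complex) \<Rightarrow> bool" where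
  "block_toeplitz n1 n2 R \<longleftrightarrow>
     (\<exists>B :: int \<Rightarrow> nat \<Rightarrow> nat \<Rightarrow> complex.
        (\<forall>m i j. i < n1 \<longrightarrow> j < n1 \<longrightarrow> B (- m) i j = cnj (B m j i)) \<and>
        (\<forall>a<n2. \<forall>b<n2. \<forall>i<n1. \<forall>j<n1.
            R (a * n1 + i) (b * n1 + j) = B (int b - int a) i j))"

text \<open>pq n R k d = (p_{k,k+d}, q_{k,k+d}), by recursion on d = l - k.\<close>
fun pq :: "nat \<Rightarrow> (nat \<Rightarrow> nat \<Rightarrow> complex) \<Rightarrow> nat \<Rightarrow> nat
           \<Rightarrow> (nat \<Rightarrow> complex) \<times> (nat \<Rightarrow> complex)" where
  "pq n R k 0 = (evec k, evec k)"
| "pq n R k (Suc d) =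
     (let l = k + Suc d;
          p' = fst (pq n R k d);           \<comment> \<open>p_{k,l-1}\<close>
          q' = snd (pq n R (Suc k) d);     \<comment> \<open>q_{k+1,l}\<close>
          a = bil n R p' l / bil n R q' l;  \<comment> \<open>a_{k,l} = p_{k,l-1}^T R e_l / v_{k+1,l}\<close>
          a' = bil n R q' k / bil n R p' k  \<comment> \<open>a'_{k,l} = q_{k+1,l}^T R e_k / v'_{k,l-1}\<close>
      in ((\<lambda>i. p' i - a * q' i), (\<lambda>i. q' i - a' * p' i)))"

definition pvec :: "nat \<Rightarrow> (nat \<Rightarrow> nat \<Rightarrow> complex) \<Rightarrow> nat \<Rightarrow> nat \<Rightarrow> nat \<Rightarrow> complex" where
  "pvec n R k l = fst (pq n R k (l - k))"

definition qvec :: "nat \<Rightarrow> (nat \<Rightarrow> nat \<Rightarrow> complex) \<Rightarrow> nat \<Rightarrow> nat \<Rightarrow> nat \<Rightarrow> complex" where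
  "qvec n R k l = snd (pq n R k (l - k))"

definition vcoef :: "nat \<Rightarrow> (nat \<Rightarrow> nat \<Rightarrow> complex) \<Rightarrow> nat \<Rightarrow> nat \<Rightarrow> complex" where
  "vcoef n R k l = bil n R (qvec n R k l) l"

definition vcoef' :: "nat \<Rightarrow> (nat \<Rightarrow> nat \<Rightarrow> complex) \<Rightarrow> nat \<Rightarrow> nat \<Rightarrow> complex" where
  "vcoef' n R k l = bil n R (pvec n R k l) k"

text \<open>for k < l\<close>
definition acoef :: "nat \<Rightarrow> (nat \<Rightarrow> nat \<Rightarrow> complex) \<Rightarrow> nat \<Rightarrow> nat \<Rightarrow> complex" where
  "acoef n R k l = bil n R (pvec n R k (l - 1)) l / vcoef n R (Suc k) l"

definition acoef' :: "nat \<Rightarrow> (nat \<Rightarrow> nat \<Rightarrow> complex) \<Rightarrow> nat \<Rightarrow> nat \<Rightarrow> complex" where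
  "acoef' n R k l = bil n R (qvec n R (Suc k) l) k / vcoef' n R k (l - 1)"

text \<open>Registers initially hold the input; each instruction appends one new register
  and costs one arithmetic operation.\<close>
datatype instr = Add nat nat | Sub nat nat | Mul nat nat | Dvd nat nat | Conj nat | Const complex

definition reg :: "complex list \<Rightarrow> nat \<Rightarrow> complex" where
  "reg m i = (if i < length m then m ! i else 0)"

fun step :: "instr \<Rightarrow> complex list \<Rightarrow> complex" where
  "step (Add i j) m = reg m i + reg m j"
| "step (Sub i j) m = reg m i - reg m j"
| "step (Mul i j) m = reg m i * reg m j"
| "step (Dvd i j) m = reg m i / reg m j"
| "step (Conj i) m = cnj (reg m i)"
| "step (Const c) m = c"

fun exec :: "instr list \<Rightarrow> complex list \<Rightarrow> complex list" where
  "exec [] m = m"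
| "exec (ins # P) m = exec P (m @ [step ins m])"

definition input_of :: "nat \<Rightarrow> (nat \<Rightarrow> nat \<Rightarrow> complex) \<Rightarrow> complex list" where
  "input_of n R = concat (map (\<lambda>i. map (\<lambda>j. R i j) [0..<n]) [0..<n])"

datatype quantity = QA nat nat | QA' nat nat | QV nat nat | QV' nat nat
  | QP nat nat nat | QQ nat nat nat

fun qval :: "nat \<Rightarrow> (nat \<Rightarrow> nat \<Rightarrow> complex) \<Rightarrow> quantity \<Rightarrow> complex" where
  "qval n R (QA k l) = acoef n R k l"
| "qval n R (QA' k l) = acoef' n R k l"
| "qval n R (QV k l) = vcoef n R k l"
| "qval n R (QV' k l) = vcoef' n R k l"
| "qval n R (QP k l i) = pvec n R k l i"
| "qval n R (QQ k l i) = qvec n R k l i"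

definition required :: "nat \<Rightarrow> nat \<Rightarrow> quantity set" where
  "required n1 n =
     {QA k l | k l. k < n1 \<and> k < l \<and> l < n} \<union> {QA' k l | k l. k < n1 \<and> k < l \<and> l < n} \<union>
     {QV k l | k l. k < n1 \<and> k \<le> l \<and> l < n} \<union> {QV' k l | k l. k < n1 \<and> k \<le> l \<and> l < n} \<union>
     {QP k l i | k l i. k < n1 \<and> k \<le> l \<and> l < n \<and> i < n} \<union>
     {QQ k l i | k l i. k < n1 \<and> k \<le> l \<and> l < n \<and> i < n}"

end

theory Submission
  imports Defs
begin


definition shf :: "nat \<Rightarrow> (nat \<Rightarrow> complex) \<Rightarrow> nat \<Rightarrow> complex" where
  "shf s x = (\<lambda>i. if s \<le> i then x (i - s) else 0)"

lemma pq_supp: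
  "\<forall>i. (i < k \<or> k + d < i) \<longrightarrow> fst (pq n R k d) i = 0 \<and> snd (pq n R k d) i = 0"
proof (induction d arbitrary: k)
  case 0
  then show ?case by (auto simp: evec_def)
next
  case (Suc d)
  have A: "fst (pq n R k d) i = 0" if "i < k \<or> k + Suc d < i" for i
    using Suc.IH[of k] that by auto
  have B: "snd (pq n R (Suc k) d) i = 0" if "i < k \<or> k + Suc d < i" for i
    using Suc.IH[of "Suc k"] that by auto
  show ?case using A B by (simp add: Let_def)
qed

lemma bil_shf:
  assumes hS: "\<And>i j. i + s < n \<Longrightarrow> j + s < n \<Longrightarrow> R (i+s) (j+s) = R i j"
    and supp: "\<And>i. hi < i \<Longrightarrow> x i = 0" and hi: "hi + s < n" and j: "j + s < n"
  shows "bil n R (shf s x) (j + s) = bil n R x j"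
proof -
  have sn: "s \<le> n" using hi by simp
  have "bil n R (shf s x) (j + s) = (\<Sum>i\<in>{..<n}. shf s x i * R i (j+s))"
    by (simp add: bil_def)
  also have "\<dots> = (\<Sum>i\<in>{s..<n}. shf s x i * R i (j+s))"
    by (rule sum.mono_neutral_right) (auto simp: shf_def)
  also have "\<dots> = (\<Sum>i\<in>{0+s..<(n-s)+s}. shf s x i * R i (j+s))"
    using sn by simp
  also have "\<dots> = (\<Sum>i\<in>{0..<n-s}. shf s x (i+s) * R (i+s) (j+s))"
    by (rule sum.shift_bounds_nat_ivl)
  also have "\<dots> = (\<Sum>i\<in>{0..<n-s}. x i * R i j)"
    by (rule sum.cong) (auto simp: shf_def hS j)
  also have "\<dots> = (\<Sum>i\<in>{..<n}. x i * R i j)"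
    by (rule sum.mono_neutral_left) (use supp hi in auto)
  finally show ?thesis by (simp add: bil_def)
qed

lemma pq_shift:
  assumes hS: "\<And>i j. i + s < n \<Longrightarrow> j + s < n \<Longrightarrow> R (i+s) (j+s) = R i j"
  shows "k + s + d < n \<Longrightarrow> fst (pq n R (k+s) d) = shf s (fst (pq n R k d))
     \<and> snd (pq n R (k+s) d) = shf s (snd (pq n R k d))"
proof (induction d arbitrary: k)
  case 0
  then show ?case by (auto simp: evec_def shf_def fun_eq_iff)
next
  case (Suc d)
  have IH1: "fst (pq n R (k+s) d) = shf s (fst (pq n R k d))" using Suc by auto
  have IH2: "snd (pq n R (Suc (k+s)) d) = shf s (snd (pq n R (Suc k) d))"
    using Suc.IH[of "Suc k"] Suc.prems by auto
  have s1: "fst (pq n R k d) i = 0" if "k + Suc d < i" for i using pq_supp[of k d n R] that by auto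
  have s2: "snd (pq n R (Suc k) d) i = 0" if "k + Suc d < i" for i using pq_supp[of "Suc k" d n R] that by auto
  have bb: "bil n R (shf s X) (j + s) = bil n R X j"
    if "\<And>i. k + Suc d < i \<Longrightarrow> X i = 0" "j + s < n" for X j
    by (rule bil_shf[where s=s and n=n and R=R and hi="k + Suc d"]) (use hS that Suc.prems in auto)
  have b1: "bil n R (shf s (fst (pq n R k d))) (Suc (k + s + d)) = bil n R (fst (pq n R k d)) (Suc (k + d))"
    using bb[of "fst (pq n R k d)" "k + Suc d", OF s1] Suc.prems by (simp add: add.commute add.left_commute)
  have b2: "bil n R (shf s (snd (pq n R (Suc k) d))) (Suc (k + s + d)) = bil n R (snd (pq n R (Suc k) d)) (Suc (k + d))"
    using bb[of "snd (pq n R (Suc k) d)" "k + Suc d", OF s2] Suc.prems by (simp add: add.commute add.left_commute)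
  have b3: "bil n R (shf s (fst (pq n R k d))) (k + s) = bil n R (fst (pq n R k d)) k"
    using bb[of "fst (pq n R k d)" "k", OF s1] Suc.prems by simp
  have b4: "bil n R (shf s (snd (pq n R (Suc k) d))) (k + s) = bil n R (snd (pq n R (Suc k) d)) k"
    using bb[of "snd (pq n R (Suc k) d)" "k", OF s2] Suc.prems by simp
  show ?case
    apply (simp add: Let_def IH1 IH2 b1 b2 b3 b4 del: pq.simps(2) add: pq.simps(2)[of n R "k+s" d] pq.simps(2)[of n R k d])
    apply (auto simp: shf_def fun_eq_iff)
    done
qed

lemma bt_shift1:
  assumes bt: "block_toeplitz n1 n2 R" and n1: "1 \<le> n1"
    and i: "i + n1 < n1*n2" and j: "j + n1 < n1*n2"
  shows "R (i + n1) (j + n1) = R i j"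
proof -
  obtain B :: "int \<Rightarrow> nat \<Rightarrow> nat \<Rightarrow> complex" where
    hB: "\<forall>a<n2. \<forall>b<n2. \<forall>i<n1. \<forall>j<n1. R (a * n1 + i) (b * n1 + j) = B (int b - int a) i j"
    using bt unfolding block_toeplitz_def by blast
  define a where "a = i div n1"
  define b where "b = j div n1"
  have ia: "i = a * n1 + i mod n1" "i + n1 = (a+1)*n1 + i mod n1" by (simp_all add: a_def)
  have jb: "j = b * n1 + j mod n1" "j + n1 = (b+1)*n1 + j mod n1" by (simp_all add: b_def)
  have a1: "a + 1 < n2"
  proof -
    have "(a+1)*n1 < n2*n1" using i ia(2) by (simp add: mult.commute)
    then show ?thesis using mult_less_cancel2[of "a+1" n1 n2] by simp
  qed
  have b1: "b + 1 < n2"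
  proof -
    have "(b+1)*n1 < n2*n1" using j jb(2) by (simp add: mult.commute)
    then show ?thesis using mult_less_cancel2[of "b+1" n1 n2] by simp
  qed
  have m: "i mod n1 < n1" "j mod n1 < n1" using n1 by auto
  have "R (i + n1) (j + n1) = B (int (b+1) - int (a+1)) (i mod n1) (j mod n1)"
    using hB a1 b1 m by (metis ia(2) jb(2))
  also have "\<dots> = B (int b - int a) (i mod n1) (j mod n1)" by simp
  also have "\<dots> = R i j" using hB a1 b1 m by (metis ia(1) jb(1) add_lessD1)
  finally show ?thesis .
qed

lemma bt_shift:
  assumes bt: "block_toeplitz n1 n2 R" and n1: "1 \<le> n1"
  shows "i + c*n1 < n1*n2 \<Longrightarrow> j + c*n1 < n1*n2 \<Longrightarrow> R (i + c*n1) (j + c*n1) = R i j"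
proof (induction c)
  case 0 then show ?case by simp
next
  case (Suc c)
  have "R (i + Suc c*n1) (j + Suc c*n1) = R ((i + c*n1) + n1) ((j + c*n1) + n1)"
    by (simp add: algebra_simps)
  also have "\<dots> = R (i + c*n1) (j + c*n1)"
    by (rule bt_shift1[OF bt n1]) (use Suc.prems in \<open>simp_all add: algebra_simps\<close>)
  also have "\<dots> = R i j" using Suc by (simp add: algebra_simps)
  finally show ?case .
qed

lemma part1:
  assumes bt: "block_toeplitz n1 n2 R" and n1: "1 \<le> n1" and kl: "k \<le> l" and ln: "l < n1*n2"
  shows "(\<forall>i<n1*n2. qvec (n1*n2) R k l i =
                    shiftU (n1*n2) (sec k n1) (qvec (n1*n2) R (k mod n1) (l - sec k n1)) i) \<and>
            vcoef (n1*n2) R k l = vcoef (n1*n2) R (k mod n1) (l - sec k n1)"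
proof -
  define n where "n = n1*n2"
  define s where "s = sec k n1"
  define k0 where "k0 = k mod n1"
  have ks: "k = k0 + s" by (simp add: s_def k0_def sec_def)
  have hS: "R (i+s) (j+s) = R i j" if "i + s < n" "j + s < n" for i j
    using bt_shift[OF bt n1, of i "k div n1" j] that by (simp add: s_def sec_def n_def mult.commute)
  have dd: "l - s - k0 = l - k" using ks kl by simp
  have lt: "k0 + s + (l - k) < n" using ks kl ln n_def by simp
  note sh = pq_shift[where s=s and n=n and R=R, OF hS lt]
  have q: "qvec n R k l = shf s (qvec n R k0 (l - s))"
    unfolding qvec_def dd using sh ks by simp
  have s2: "snd (pq n R k0 (l-k)) i = 0" if "k0 + (l-k) < i" for i
    using pq_supp[of k0 "l-k" n R] that by auto
  have v: "vcoef n R k l = vcoef n R k0 (l - s)"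
  proof -
    have "vcoef n R k l = bil n R (shf s (qvec n R k0 (l - s))) ((l - s) + s)"
      unfolding vcoef_def q using ks kl by simp
    also have "\<dots> = vcoef n R k0 (l - s)"
      unfolding vcoef_def qvec_def dd
      by (rule bil_shf[where s=s and n=n and R=R, OF hS s2]) (use lt ks kl in auto)
    finally show ?thesis .
  qed
  show ?thesis using q v
    by (auto simp: n_def[symmetric] s_def[symmetric] k0_def[symmetric] shiftU_def shf_def)
qed



fun ev :: "complex list \<Rightarrow> instr \<Rightarrow> complex" where
  "ev M (Add i j) = M!i + M!j"
| "ev M (Sub i j) = M!i - M!j"
| "ev M (Mul i j) = M!i * M!j"
| "ev M (Dvd i j) = M!i / M!j"
| "ev M (Conj i) = cnj (M!i)"
| "ev M (Const c) = c"

fun refs :: "instr \<Rightarrow> nat set" where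
  "refs (Add i j) = {i,j}"
| "refs (Sub i j) = {i,j}"
| "refs (Mul i j) = {i,j}"
| "refs (Dvd i j) = {i,j}"
| "refs (Conj i) = {i}"
| "refs (Const c) = {}"

lemma exec_app: "\<exists>ys. exec P m = m @ ys"
  by (induction P arbitrary: m) (auto, metis append.assoc)

lemma exec_len: "length (exec P m) = length m + length P"
  by (induction P arbitrary: m) auto

lemma exec_append: "exec (P @ Q) m = exec Q (exec P m)"
  by (induction P arbitrary: m) auto

lemma exec_nth:
  assumes t: "t < length P"
  shows "exec P m ! (length m + t) = step (P!t) (exec (take t P) m)"
proof -
  have P: "P = take t P @ [P!t] @ drop (Suc t) P" using t
    by (metis append_Cons append_Nil id_take_nth_drop)
  have "exec P m = exec (drop (Suc t) P) (exec (take t P) m @ [step (P!t) (exec (take t P) m)])"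
    by (subst P) (simp add: exec_append)
  moreover obtain ys where "exec (drop (Suc t) P) (exec (take t P) m @ [step (P!t) (exec (take t P) m)])
     = (exec (take t P) m @ [step (P!t) (exec (take t P) m)]) @ ys" using exec_app by blast
  moreover have "length (exec (take t P) m) = length m + t" using t by (simp add: exec_len)
  ultimately show ?thesis by (simp add: nth_append)
qed

lemma exec_prefix:
  assumes t: "t \<le> length P" and r: "r < length m + t"
  shows "exec P m ! r = exec (take t P) m ! r"
proof -
  have P: "P = take t P @ drop t P" by simp
  obtain ys where "exec (drop t P) (exec (take t P) m) = exec (take t P) m @ ys" using exec_app by blast
  moreover have "exec P m = exec (drop t P) (exec (take t P) m)"
    by (metis append_take_drop_id exec_append)
  moreover have "length (exec (take t P) m) = length m + t" using t by (simp add: exec_len)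
  ultimately show ?thesis using r by (simp add: nth_append)
qed

lemma exec_ev:
  assumes t: "t < length P" and r: "\<forall>r\<in>refs (P!t). r < length m + t"
  shows "exec P m ! (length m + t) = ev (exec P m) (P!t)"
proof -
  have rg: "reg (exec (take t P) m) r = exec P m ! r" if "r < length m + t" for r
    using exec_prefix[of t P r m] that t by (simp add: reg_def exec_len)
  show ?thesis unfolding exec_nth[OF t]
    using r by (cases "P!t") (auto simp: rg)
qed

lemma concat_map_upt:
  "0 < m \<Longrightarrow> concat (map (\<lambda>i. map (f i) [0..<m]) [0..<a]) = map (\<lambda>t. f (t div m) (t mod m)) [0..<a*m]"
proof (induction a)
  case 0 then show ?case by simp
next
  case (Suc a)
  have "[0..<Suc a * m] = [0..<a*m] @ [a*m..<a*m+m]"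
    using upt_add_eq_append[of 0 "a*m" m] by (simp add: add.commute)
  moreover have "map (\<lambda>t. f (t div m) (t mod m)) [a*m..<a*m+m] = map (f a) [0..<m]"
  proof (rule nth_equalityI)
    fix i assume "i < length (map (\<lambda>t. f (t div m) (t mod m)) [a*m..<a*m+m])"
    then have i: "i < m" by simp
    have "(a*m + i) div m = a" "(a*m+i) mod m = i" using i by auto
    then show "map (\<lambda>t. f (t div m) (t mod m)) [a*m..<a*m+m] ! i = map (f a) [0..<m] ! i"
      using i by (simp add: add.commute)
  qed simp
  ultimately show ?case using Suc by simp
qed

lemma input_map: "input_of n R = map (\<lambda>t. R (t div n) (t mod n)) [0..<n*n]"
proof (cases "n = 0")
  case True then show ?thesis by (simp add: input_of_def)
next
  case False then show ?thesis
    unfolding input_of_def using concat_map_upt[of n "\<lambda>i j. R i j" n] by simp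
qed

lemma input_len: "length (input_of n R) = n*n"
  by (simp add: input_map)

lemma input_nth: "i < n \<Longrightarrow> j < n \<Longrightarrow> input_of n R ! (i*n+j) = R i j"
proof -
  assume i: "i < n" and j: "j < n"
  have "input_of n R = map (\<lambda>t. R (t div n) (t mod n)) [0..<n*n]"
    by (rule input_map)
  moreover have "i*n+j < n*n" using i j
    by (metis add_lessD1 less_imp_le_nat mult_le_mono1 nat_add_left_cancel_less mult_Suc less_le_trans Suc_leI add.commute)
  ultimately show ?thesis using j by simp
qed



definition LL :: "nat \<Rightarrow> nat" where "LL n = 16*n + 2"
definition bs :: "nat \<Rightarrow> nat \<Rightarrow> nat \<Rightarrow> nat \<Rightarrow> nat" where
  "bs n1 n d k = n*n + 1 + (d*n1+k) * LL n"
definition locP :: "nat \<Rightarrow> nat \<Rightarrow> nat \<Rightarrow> nat \<Rightarrow> nat \<Rightarrow> nat" where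
  "locP n1 n d k i = bs n1 n d k + 8*n + 3 + 2*i"
definition locQ :: "nat \<Rightarrow> nat \<Rightarrow> nat \<Rightarrow> nat \<Rightarrow> nat \<Rightarrow> nat" where
  "locQ n1 n d k i = bs n1 n d k + 10*n + 3 + 2*i"
definition qsrc :: "nat \<Rightarrow> nat \<Rightarrow> nat \<Rightarrow> nat \<Rightarrow> nat \<Rightarrow> nat" where
  "qsrc n1 n d k i = (if Suc k < n1 then locQ n1 n d (Suc k) i
      else if i < n1 then n*n else locQ n1 n d 0 (i - n1))"

definition dotins :: "nat \<Rightarrow> nat \<Rightarrow> nat \<Rightarrow> (nat \<Rightarrow> nat) \<Rightarrow> nat \<Rightarrow> instr" where
  "dotins n pos w x c = (if even w then Mul (x (w div 2)) ((w div 2)*n + c)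
      else Add (if w div 2 = 0 then n*n else pos - 2) (pos - 1))"

definition blockins :: "nat \<Rightarrow> nat \<Rightarrow> nat \<Rightarrow> nat \<Rightarrow> nat \<Rightarrow> nat \<Rightarrow> instr" where
  "blockins n1 n d k ofs pos =
    (let b = bs n1 n d k; l = k + d in
     if ofs < 8*n then
       (if d = 0 then Const 0 else
         dotins n pos (ofs mod (2*n))
           (if ofs div (2*n) = 0 \<or> ofs div (2*n) = 3 then locP n1 n (d-1) k else qsrc n1 n (d-1) k)
           (if ofs div (2*n) \<le> 1 then l else k))
     else if ofs = 8*n then (if d = 0 then Const 0 else Dvd (b + 2*n - 1) (b + 4*n - 1))
     else if ofs = 8*n+1 then (if d = 0 then Const 0 else Dvd (b + 6*n - 1) (b + 8*n - 1))
     else (let ofs2 = ofs - (8*n+2); j = ofs2 div (2*n); w = ofs2 mod (2*n); i = w div 2 in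
       if j = 0 then (if d = 0 then (if even w then Const 0 else Const (evec k i))
                      else if even w then Mul (b + 8*n) (qsrc n1 n (d-1) k i)
                      else Sub (locP n1 n (d-1) k i) (pos - 1))
       else if j = 1 then (if d = 0 then (if even w then Const 0 else Const (evec k i))
                      else if even w then Mul (b + 8*n + 1) (locP n1 n (d-1) k i)
                      else Sub (qsrc n1 n (d-1) k i) (pos - 1))
       else if j = 2 then dotins n pos w (locP n1 n d k) k
       else dotins n pos w (locQ n1 n d k) l))"

definition instr_at :: "nat \<Rightarrow> nat \<Rightarrow> nat \<Rightarrow> instr" where
  "instr_at n1 n t = (if t = 0 then Const 0 else
     blockins n1 n ((t-1) div LL n div n1) ((t-1) div LL n mod n1) ((t-1) mod LL n) (n*n+t))"

definition prog :: "nat \<Rightarrow> nat \<Rightarrow> instr list" where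
  "prog n1 n = map (instr_at n1 n) [0..<1 + n*n1*LL n]"

lemma dm1: "(w::nat) < m \<Longrightarrow> (m*j + w) div m = j"
  by auto
lemma dm2: "(w::nat) < m \<Longrightarrow> (m*j + w) mod m = w"
  by auto

lemma blk_instr:
  assumes "k < n1" "ofs < LL n"
  shows "instr_at n1 n (1 + (d*n1+k)*LL n + ofs) = blockins n1 n d k ofs (bs n1 n d k + ofs)"
proof -
  have 1: "(1 + (d*n1+k)*LL n + ofs) - 1 = LL n * (n1*d+k) + ofs" by (simp add: algebra_simps)
  have 2: "(LL n * (n1*d+k) + ofs) div LL n = n1*d+k" "(LL n * (n1*d+k) + ofs) mod LL n = ofs"
    using assms by (simp_all only: dm1 dm2)
  have 3: "(n1*d+k) div n1 = d" "(n1*d+k) mod n1 = k"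
    using assms by (simp_all only: dm1 dm2)
  have 4: "n*n + (1 + (d*n1+k)*LL n + ofs) = bs n1 n d k + ofs" by (simp add: bs_def)
  show ?thesis unfolding instr_at_def 1 2 3 4 by simp
qed

lemma len_prog: "length (prog n1 n) = 1 + n*n1*LL n"
  by (simp add: prog_def)

lemma blk_bound:
  assumes "d < n" "k < n1" "ofs < LL n"
  shows "(d*n1+k)*LL n + ofs < n*n1*LL n"
proof -
  have "d*n1 + k + 1 \<le> n*n1"
  proof -
    have "d*n1 + k + 1 \<le> d*n1 + n1" using assms by simp
    also have "\<dots> = (d+1)*n1" by simp
    also have "\<dots> \<le> n*n1" using assms by (intro mult_le_mono1) simp
    finally show ?thesis .
  qed
  then have "(d*n1 + k + 1)*LL n \<le> n*n1*LL n" by (rule mult_le_mono1)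
  then show ?thesis using assms by (simp add: algebra_simps)
qed

lemma dot_refs:
  assumes "x (w div 2) < pos" "c < n" "w < 2*n" "n*n < pos"
  shows "\<forall>r\<in>refs (dotins n pos w x c). r < pos"
proof -
  have "w div 2 < n" using assms by simp
  then have "(w div 2)*n + c < n*n"
    using assms(2) by (metis add_lessD1 less_imp_le_nat mult_le_mono1 nat_add_left_cancel_less mult_Suc less_le_trans Suc_leI add.commute)
  then show ?thesis using assms by (auto simp: dotins_def)
qed

lemma dot_val:
  assumes h: "\<forall>w<2*n. M!(S+w) = ev M (dotins n (S+w) w x c)" and z: "M!(n*n) = 0"
  shows "i < n \<Longrightarrow> M!(S + 2*i + 1) = (\<Sum>j<Suc i. M!(x j) * M!(j*n + c))"
proof (induction i)
  case 0
  have a: "M!(S+1) = M!(n*n) + M!(S+0)" using h[rule_format, of 1] 0 by (simp add: dotins_def)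
  have b: "M!(S+0) = M!(x 0) * M!(0*n+c)" using h[rule_format, of 0] 0 by (simp add: dotins_def)
  show ?case using a b z by simp
next
  case (Suc i)
  have a: "M!(S + 2*Suc i + 1) = M!(S + 2*i + 1) + M!(S + 2*Suc i)"
    using h[rule_format, of "2*Suc i + 1"] Suc.prems by (simp add: dotins_def)
  have b: "M!(S + 2*Suc i) = M!(x (Suc i)) * M!(Suc i*n+c)"
    using h[rule_format, of "2*Suc i"] Suc.prems by (simp add: dotins_def)
  show ?case using a b Suc by simp
qed

lemma dot_full:
  assumes h: "\<forall>w<2*n. M!(S+w) = ev M (dotins n (S+w) w x c)" and z: "M!(n*n) = 0"
    and n: "1 \<le> n"
  shows "M!(S + 2*n - 1) = (\<Sum>j<n. M!(x j) * M!(j*n + c))"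
proof -
  have "M!(S + 2*(n-1) + 1) = (\<Sum>j<Suc (n-1). M!(x j) * M!(j*n + c))"
    using dot_val[OF h z, of "n-1"] n by simp
  moreover have "S + 2*(n-1) + 1 = S + 2*n - 1" "Suc (n-1) = n" using n by auto
  ultimately show ?thesis by simp
qed



lemma idx_lt: "(i::nat) < n \<Longrightarrow> j < n \<Longrightarrow> i*n + j < n*n"
  by (metis add_lessD1 less_imp_le_nat mult_le_mono1 nat_add_left_cancel_less mult_Suc less_le_trans Suc_leI add.commute)

lemma blockins_lo:
  assumes j: "j < 4" and w: "w < 2*n"
  shows "blockins n1 n d k (2*n*j + w) pos = (if d = 0 then Const 0 else
     dotins n pos w (if j = 0 \<or> j = 3 then locP n1 n (d-1) k else qsrc n1 n (d-1) k)
       (if j \<le> 1 then k+d else k))"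
proof -
  have "2*n*j \<le> 2*n*3" using j by (intro mult_le_mono2) simp
  then have lt: "2*n*j + w < 8*n" using w by linarith
  have dv: "(2*n*j + w) div (2*n) = j" "(2*n*j + w) mod (2*n) = w"
    using w by (simp_all only: dm1 dm2)
  show ?thesis unfolding blockins_def Let_def using lt dv by simp
qed

lemma blockins_hi:
  assumes w: "w < 2*n"
  shows "blockins n1 n d k (8*n+2 + (2*n*j + w)) pos =
      (let b = bs n1 n d k; i = w div 2 in
       if j = 0 then (if d = 0 then (if even w then Const 0 else Const (evec k i))
                      else if even w then Mul (b + 8*n) (qsrc n1 n (d-1) k i)
                      else Sub (locP n1 n (d-1) k i) (pos - 1))
       else if j = 1 then (if d = 0 then (if even w then Const 0 else Const (evec k i))
                      else if even w then Mul (b + 8*n + 1) (locP n1 n (d-1) k i)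
                      else Sub (qsrc n1 n (d-1) k i) (pos - 1))
       else if j = 2 then dotins n pos w (locP n1 n d k) k
       else dotins n pos w (locQ n1 n d k) (k+d))"
proof -
  define o2 where "o2 = 2*n*j + w"
  have dv: "o2 div (2*n) = j" "o2 mod (2*n) = w"
    using w unfolding o2_def by (simp_all only: dm1 dm2)
  have "\<not> 8*n+2 + o2 < 8*n" "8*n+2 + o2 \<noteq> 8*n" "8*n+2 + o2 \<noteq> 8*n+1" "8*n+2 + o2 - (8*n+2) = o2"
    by simp_all
  then show ?thesis unfolding blockins_def Let_def o2_def[symmetric] using dv by simp
qed

lemma bs_Suc_d: "bs n1 n (Suc d) k = bs n1 n d k + n1 * LL n"
  by (simp add: bs_def algebra_simps)
lemma bs_Suc_k: "bs n1 n d (Suc k) = bs n1 n d k + LL n"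
  by (simp add: bs_def algebra_simps)
lemma bs_ge: "n*n < bs n1 n d k"
  by (simp add: bs_def)
lemma bs_mono_k: "bs n1 n d 0 \<le> bs n1 n d k"
  by (simp add: bs_def)

locale prg =
  fixes n1 n :: nat and R :: "nat \<Rightarrow> nat \<Rightarrow> complex"
  assumes n1: "1 \<le> n1" and nn: "1 \<le> n"
    and hS: "\<And>i j. i + n1 < n \<Longrightarrow> j + n1 < n \<Longrightarrow> R (i+n1) (j+n1) = R i j"
begin

abbreviation MM where "MM \<equiv> exec (prog n1 n) (input_of n R)"

lemma L_ge: "LL n \<le> n1 * LL n" using n1 mult_le_mono1[of 1 n1 "LL n"] by simp

lemma locP_lt: "i < n \<Longrightarrow> locP n1 n d k i < bs n1 n d k + LL n"
  by (simp add: locP_def LL_def)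
lemma locQ_lt: "i < n \<Longrightarrow> locQ n1 n d k i < bs n1 n d k + LL n"
  by (simp add: locQ_def LL_def)

lemma prevP_lt: "i < n \<Longrightarrow> locP n1 n d k i < bs n1 n (Suc d) k"
  unfolding bs_Suc_d using locP_lt[of i d k] L_ge by linarith

lemma prevQ_lt: assumes "k < n1" "i < n" shows "qsrc n1 n d k i < bs n1 n (Suc d) k"
proof (cases "Suc k < n1")
  case True
  have "2 * LL n \<le> n1 * LL n" using True by (intro mult_le_mono1) simp
  moreover have "locQ n1 n d (Suc k) i < bs n1 n d k + LL n + LL n"
    using locQ_lt[of i d "Suc k"] assms by (simp add: bs_Suc_k)
  ultimately have "locQ n1 n d (Suc k) i < bs n1 n d k + n1 * LL n" by linarith
  then show ?thesis using True unfolding qsrc_def bs_Suc_d by simp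
next
  case False
  have "i - n1 < n" using assms by simp
  then have "locQ n1 n d 0 (i - n1) < bs n1 n d 0 + LL n" by (rule locQ_lt)
  then have "locQ n1 n d 0 (i - n1) < bs n1 n d k + n1 * LL n"
    using bs_mono_k[of n1 n d k] L_ge by linarith
  then show ?thesis using False bs_ge[of n n1 "Suc d" k]
    by (auto simp: qsrc_def bs_Suc_d)
qed

lemma M_input: "r < n*n \<Longrightarrow> MM ! r = input_of n R ! r"
  using exec_prefix[of 0 "prog n1 n" r "input_of n R"] by (simp add: input_len)

lemma M_R: "i < n \<Longrightarrow> j < n \<Longrightarrow> MM ! (i*n+j) = R i j"
  using M_input[OF idx_lt] input_nth by simp

lemma M_zero: "MM ! (n*n) = 0"
proof -
  have "0 < length (prog n1 n)" by (simp add: len_prog)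
  moreover have "prog n1 n ! 0 = Const 0" unfolding prog_def
    by (simp del: upt_Suc add: nth_upt instr_at_def)
  ultimately show ?thesis using exec_ev[of 0 "prog n1 n" "input_of n R"] by (simp add: input_len)
qed

lemma M_blk:
  assumes "k < n1" "d < n" "ofs < LL n"
    and r: "\<forall>r\<in>refs (blockins n1 n d k ofs (bs n1 n d k + ofs)). r < bs n1 n d k + ofs"
  shows "MM ! (bs n1 n d k + ofs) = ev MM (blockins n1 n d k ofs (bs n1 n d k + ofs))"
proof -
  define t where "t = 1 + (d*n1+k)*LL n + ofs"
  have t: "t < length (prog n1 n)" using blk_bound[OF assms(2,1,3)] by (simp add: t_def len_prog)
  have P: "prog n1 n ! t = blockins n1 n d k ofs (bs n1 n d k + ofs)"
    using t blk_instr[OF assms(1,3), of d] by (simp add: prog_def t_def len_prog del: upt_Suc)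
  have e: "length (input_of n R) + t = bs n1 n d k + ofs" by (simp add: input_len t_def bs_def)
  show ?thesis using exec_ev[OF t, of "input_of n R"] r unfolding P e by simp
qed

end


context prg begin

lemma seg_lo:
  assumes k: "k < n1" and kd: "k + Suc d < n" and j: "j < 4" and w: "w < 2*n"
  shows "MM!(bs n1 n (Suc d) k + (2*n*j + w)) = ev MM (dotins n (bs n1 n (Suc d) k + (2*n*j + w)) w
     (if j=0 \<or> j=3 then locP n1 n d k else qsrc n1 n d k) (if j \<le> 1 then k + Suc d else k))"
proof -
  have "2*n*j \<le> 2*n*3" using j by (intro mult_le_mono2) simp
  then have lt: "2*n*j + w < LL n" using w unfolding LL_def by linarith
  have wd: "w div 2 < n" using w by simp
  have x: "(if j=0 \<or> j=3 then locP n1 n d k else qsrc n1 n d k) (w div 2) < bs n1 n (Suc d) k + (2*n*j + w)"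
    using prevP_lt[OF wd, of d k] prevQ_lt[OF k wd, of d] by auto
  have c: "(if j \<le> 1 then k + Suc d else k) < n" using kd by auto
  have pos: "n*n < bs n1 n (Suc d) k + (2*n*j + w)" using bs_ge[of n n1 "Suc d" k] by simp
  note bl = blockins_lo[OF j w, of n1 "Suc d" k "bs n1 n (Suc d) k + (2*n*j + w)"]
  have bl2: "blockins n1 n (Suc d) k (2*n*j + w) (bs n1 n (Suc d) k + (2*n*j + w)) =
     dotins n (bs n1 n (Suc d) k + (2*n*j + w)) w
     (if j=0 \<or> j=3 then locP n1 n d k else qsrc n1 n d k) (if j \<le> 1 then k + Suc d else k)"
    using bl by simp
  have r: "\<forall>r\<in>refs (blockins n1 n (Suc d) k (2*n*j + w) (bs n1 n (Suc d) k + (2*n*j + w))).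
        r < bs n1 n (Suc d) k + (2*n*j + w)"
    unfolding bl2 by (rule dot_refs) (use x c w pos in simp_all)
  show ?thesis using M_blk[OF k _ lt r] kd bl by simp
qed

lemma seg_hi:
  assumes k: "k < n1" and kd: "k + d < n" and j: "j = 2 \<or> j = 3" and w: "w < 2*n"
  shows "MM!(bs n1 n d k + (8*n+2 + (2*n*j + w))) = ev MM (dotins n (bs n1 n d k + (8*n+2 + (2*n*j + w))) w
     (if j=2 then locP n1 n d k else locQ n1 n d k) (if j = 2 then k else k + d))"
proof -
  have "2*n*j \<le> 2*n*3" using j by (intro mult_le_mono2) auto
  then have lt: "8*n+2 + (2*n*j + w) < LL n" using w unfolding LL_def by linarith
  have wd2: "2*(w div 2) \<le> w" by simp
  have x: "(if j=2 then locP n1 n d k else locQ n1 n d k) (w div 2) < bs n1 n d k + (8*n+2 + (2*n*j + w))"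
  proof (cases "j = 2")
    case True then show ?thesis using wd2 nn by (simp add: locP_def)
  next
    case False then have "j = 3" using j by simp
    then show ?thesis using wd2 nn by (simp add: locQ_def)
  qed
  have c: "(if j = 2 then k else k + d) < n" using kd by auto
  have pos: "n*n < bs n1 n d k + (8*n+2 + (2*n*j + w))" using bs_ge[of n n1 d k] by simp
  have bl: "blockins n1 n d k (8*n+2 + (2*n*j + w)) (bs n1 n d k + (8*n+2 + (2*n*j + w)))
     = dotins n (bs n1 n d k + (8*n+2 + (2*n*j + w))) w
     (if j=2 then locP n1 n d k else locQ n1 n d k) (if j = 2 then k else k + d)"
    using blockins_hi[OF w, of n1 d k j] j by (auto simp: Let_def)
  have r: "\<forall>r\<in>refs (blockins n1 n d k (8*n+2 + (2*n*j + w)) (bs n1 n d k + (8*n+2 + (2*n*j + w)))).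
        r < bs n1 n d k + (8*n+2 + (2*n*j + w))"
    unfolding bl by (rule dot_refs) (use x c w pos in simp_all)
  show ?thesis using M_blk[OF k _ lt r] kd bl by simp
qed

lemma blk_zero:
  assumes k: "k < n1" and kn: "k < n" and i: "i < n"
  shows "MM!(locP n1 n 0 k i) = evec k i \<and> MM!(locQ n1 n 0 k i) = evec k i"
proof -
  have w: "2*i+1 < 2*n" using i by simp
  have e: "\<not> even (2*i+1)" "(2*i+1) div 2 = i" by simp_all
  have lt0: "8*n+2 + (2*n*0 + (2*i+1)) < LL n" using i by (simp add: LL_def)
  have lt1: "8*n+2 + (2*n*1 + (2*i+1)) < LL n" using i by (simp add: LL_def)
  have b0: "blockins n1 n 0 k (8*n+2 + (2*n*0 + (2*i+1))) pos = Const (evec k i)" for pos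
    using blockins_hi[OF w, of n1 0 k 0 pos] e by (simp add: Let_def)
  have b1: "blockins n1 n 0 k (8*n+2 + (2*n*1 + (2*i+1))) pos = Const (evec k i)" for pos
    using blockins_hi[OF w, of n1 0 k 1 pos] e by (simp add: Let_def)
  have "MM!(bs n1 n 0 k + (8*n+2 + (2*n*0 + (2*i+1)))) = evec k i"
    using M_blk[OF k _ lt0] b0 kn by simp
  moreover have "MM!(bs n1 n 0 k + (8*n+2 + (2*n*1 + (2*i+1)))) = evec k i"
    using M_blk[OF k _ lt1] b1 kn by simp
  moreover have "locP n1 n 0 k i = bs n1 n 0 k + (8*n+2 + (2*n*0 + (2*i+1)))"
    "locQ n1 n 0 k i = bs n1 n 0 k + (8*n+2 + (2*n*1 + (2*i+1)))" by (simp_all add: locP_def locQ_def)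
  ultimately show ?thesis by simp
qed

lemma blk_div:
  assumes k: "k < n1" and kd: "k + Suc d < n"
  shows "MM!(bs n1 n (Suc d) k + 8*n) = MM!(bs n1 n (Suc d) k + 2*n - 1) / MM!(bs n1 n (Suc d) k + 4*n - 1)"
    "MM!(bs n1 n (Suc d) k + (8*n+1)) = MM!(bs n1 n (Suc d) k + 6*n - 1) / MM!(bs n1 n (Suc d) k + 8*n - 1)"
proof -
  have lt0: "8*n < LL n" "8*n+1 < LL n" by (simp_all add: LL_def)
  have b0: "blockins n1 n (Suc d) k (8*n) pos = Dvd (bs n1 n (Suc d) k + 2*n - 1) (bs n1 n (Suc d) k + 4*n - 1)" for pos
    by (simp add: blockins_def Let_def)
  have b1: "blockins n1 n (Suc d) k (8*n+1) pos = Dvd (bs n1 n (Suc d) k + 6*n - 1) (bs n1 n (Suc d) k + 8*n - 1)" for pos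
    by (simp add: blockins_def Let_def)
  have ineq: "bs n1 n (Suc d) k + 2*n - 1 < bs n1 n (Suc d) k + 8*n"
     "bs n1 n (Suc d) k + 4*n - 1 < bs n1 n (Suc d) k + 8*n"
     "bs n1 n (Suc d) k + 6*n - 1 < bs n1 n (Suc d) k + (8*n+1)"
     "bs n1 n (Suc d) k + 8*n - 1 < bs n1 n (Suc d) k + (8*n+1)" using nn by simp_all
  show "MM!(bs n1 n (Suc d) k + 8*n) = MM!(bs n1 n (Suc d) k + 2*n - 1) / MM!(bs n1 n (Suc d) k + 4*n - 1)"
    using M_blk[where d="Suc d", OF k _ lt0(1)] b0 kd ineq by simp
  show "MM!(bs n1 n (Suc d) k + (8*n+1)) = MM!(bs n1 n (Suc d) k + 6*n - 1) / MM!(bs n1 n (Suc d) k + 8*n - 1)"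
    using M_blk[where d="Suc d", OF k _ lt0(2)] b1 kd ineq by simp
qed

lemma blk_upd:
  assumes k: "k < n1" and kd: "k + Suc d < n" and i: "i < n"
  shows "MM!(locP n1 n (Suc d) k i) = MM!(locP n1 n d k i) - MM!(bs n1 n (Suc d) k + 8*n) * MM!(qsrc n1 n d k i)"
    "MM!(locQ n1 n (Suc d) k i) = MM!(qsrc n1 n d k i) - MM!(bs n1 n (Suc d) k + (8*n+1)) * MM!(locP n1 n d k i)"
proof -
  let ?b = "bs n1 n (Suc d) k"
  have we: "2*i < 2*n" and wo: "2*i+1 < 2*n" using i by simp_all
  have e: "even (2*i)" "(2*i) div 2 = i" "\<not> even (2*i+1)" "(2*i+1) div 2 = i" by simp_all
  have lt: "8*n+2 + (2*n*j + (2*i)) < LL n" "8*n+2 + (2*n*j + (2*i+1)) < LL n" if "j \<le> 1" for j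
  proof -
    have "2*n*j \<le> 2*n*1" using that by (intro mult_le_mono2) auto
    then show "8*n+2 + (2*n*j + (2*i)) < LL n" "8*n+2 + (2*n*j + (2*i+1)) < LL n"
      using i unfolding LL_def by linarith+
  qed
  have pq: "qsrc n1 n d k i < ?b" using prevQ_lt[OF k i] .
  have pp: "locP n1 n d k i < ?b" using prevP_lt[OF i] .
  have kd': "Suc d < n" using kd by simp
  have b0e: "blockins n1 n (Suc d) k (8*n+2 + (2*n*0 + 2*i)) pos = Mul (?b + 8*n) (qsrc n1 n d k i)" for pos
    using blockins_hi[OF we, of n1 "Suc d" k 0 pos] e by (simp add: Let_def)
  have b0o: "blockins n1 n (Suc d) k (8*n+2 + (2*n*0 + (2*i+1))) pos = Sub (locP n1 n d k i) (pos - 1)" for pos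
    using blockins_hi[OF wo, of n1 "Suc d" k 0 pos] e by (simp add: Let_def)
  have b1e: "blockins n1 n (Suc d) k (8*n+2 + (2*n*1 + 2*i)) pos = Mul (?b + 8*n + 1) (locP n1 n d k i)" for pos
    using blockins_hi[OF we, of n1 "Suc d" k 1 pos] e by (simp add: Let_def)
  have b1o: "blockins n1 n (Suc d) k (8*n+2 + (2*n*1 + (2*i+1))) pos = Sub (qsrc n1 n d k i) (pos - 1)" for pos
    using blockins_hi[OF wo, of n1 "Suc d" k 1 pos] e by (simp add: Let_def)
  have m0e: "MM!(?b + (8*n+2 + (2*n*0 + 2*i))) = MM!(?b + 8*n) * MM!(qsrc n1 n d k i)"
    using M_blk[OF k kd' lt(1)[of 0]] b0e pq by simp
  have m0o: "MM!(?b + (8*n+2 + (2*n*0 + (2*i+1)))) = MM!(locP n1 n d k i) - MM!(?b + (8*n+2 + (2*n*0 + 2*i)))"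
    using M_blk[OF k kd' lt(2)[of 0]] b0o pp by simp
  have m1e: "MM!(?b + (8*n+2 + (2*n*1 + 2*i))) = MM!(?b + (8*n+1)) * MM!(locP n1 n d k i)"
    using M_blk[OF k kd' lt(1)[of 1]] b1e pp by (simp add: add.assoc)
  have m1o: "MM!(?b + (8*n+2 + (2*n*1 + (2*i+1)))) = MM!(qsrc n1 n d k i) - MM!(?b + (8*n+2 + (2*n*1 + 2*i)))"
    using M_blk[OF k kd' lt(2)[of 1]] b1o pq by simp
  have a: "locP n1 n (Suc d) k i = ?b + (8*n+2 + (2*n*0 + (2*i+1)))"
    "locQ n1 n (Suc d) k i = ?b + (8*n+2 + (2*n*1 + (2*i+1)))" by (simp_all add: locP_def locQ_def)
  show "MM!(locP n1 n (Suc d) k i) = MM!(locP n1 n d k i) - MM!(?b + 8*n) * MM!(qsrc n1 n d k i)"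
    unfolding a m0o m0e ..
  show "MM!(locQ n1 n (Suc d) k i) = MM!(qsrc n1 n d k i) - MM!(?b + (8*n+1)) * MM!(locP n1 n d k i)"
    unfolding a m1o m1e ..
qed

end


context prg begin

lemma sum_bil:
  assumes "\<forall>j<n. MM!(x j) = v j" "c < n"
  shows "(\<Sum>j<n. MM!(x j) * MM!(j*n+c)) = bil n R v c"
  unfolding bil_def by (rule sum.cong) (use assms M_R in auto)

lemma qsrc_val:
  assumes IH: "\<And>k' i. k' < n1 \<Longrightarrow> k' + d < n \<Longrightarrow> i < n \<Longrightarrow>
       MM!(locP n1 n d k' i) = fst (pq n R k' d) i \<and> MM!(locQ n1 n d k' i) = snd (pq n R k' d) i"
    and k: "k < n1" and kd: "k + Suc d < n" and i: "i < n"
  shows "MM!(qsrc n1 n d k i) = snd (pq n R (Suc k) d) i"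
proof (cases "Suc k < n1")
  case True
  then show ?thesis using IH[of "Suc k" i] kd i by (simp add: qsrc_def)
next
  case False
  then have kk: "Suc k = n1" using k by simp
  have sh: "snd (pq n R (0 + n1) d) = shf n1 (snd (pq n R 0 d))"
    using pq_shift[where s=n1 and n=n and R=R and k=0 and d=d, OF hS] kd kk by auto
  show ?thesis
  proof (cases "i < n1")
    case True
    then show ?thesis using M_zero sh kk by (simp add: qsrc_def shf_def)
  next
    case False
    then have "MM!(locQ n1 n d 0 (i - n1)) = snd (pq n R 0 d) (i - n1)"
      using IH[of 0 "i - n1"] kd i n1 by simp
    then show ?thesis using False sh kk by (simp add: qsrc_def shf_def)
  qed
qed

lemma blk_coef:
  assumes k: "k < n1" and kd: "k + Suc d < n"
    and HP: "\<forall>i<n. MM!(locP n1 n d k i) = fst (pq n R k d) i"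
    and HQ: "\<forall>i<n. MM!(qsrc n1 n d k i) = snd (pq n R (Suc k) d) i"
  shows "MM!(bs n1 n (Suc d) k + 8*n) = bil n R (fst (pq n R k d)) (k + Suc d) / bil n R (snd (pq n R (Suc k) d)) (k + Suc d)"
    "MM!(bs n1 n (Suc d) k + (8*n+1)) = bil n R (snd (pq n R (Suc k) d)) k / bil n R (fst (pq n R k d)) k"
proof -
  let ?b = "bs n1 n (Suc d) k"
  let ?l = "k + Suc d"
  have seg: "\<forall>w<2*n. MM!((?b + 2*n*j) + w) = ev MM (dotins n ((?b + 2*n*j) + w) w
     (if j=0 \<or> j=3 then locP n1 n d k else qsrc n1 n d k) (if j \<le> 1 then ?l else k))" if "j < 4" for j
    using seg_lo[OF k kd that] by (simp add: add.assoc)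
  have ln: "?l < n" "k < n" using kd by auto
  have s0: "MM!(?b + 2*n - 1) = bil n R (fst (pq n R k d)) ?l"
    using dot_full[OF seg[of 0] M_zero nn] sum_bil[OF HP ln(1)] by simp
  have s1: "MM!(?b + 4*n - 1) = bil n R (snd (pq n R (Suc k) d)) ?l"
  proof -
    have "MM!(?b + 2*n*1 + 2*n - 1) = bil n R (snd (pq n R (Suc k) d)) ?l"
      using dot_full[OF seg[of 1] M_zero nn] sum_bil[OF HQ ln(1)] by simp
    moreover have "?b + 2*n*1 + 2*n - 1 = ?b + 4*n - 1" by simp
    ultimately show ?thesis by simp
  qed
  have s2: "MM!(?b + 6*n - 1) = bil n R (snd (pq n R (Suc k) d)) k"
  proof -
    have "MM!(?b + 2*n*2 + 2*n - 1) = bil n R (snd (pq n R (Suc k) d)) k"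
      using dot_full[OF seg[of 2] M_zero nn] sum_bil[OF HQ ln(2)] by simp
    moreover have "?b + 2*n*2 + 2*n - 1 = ?b + 6*n - 1" by simp
    ultimately show ?thesis by simp
  qed
  have s3: "MM!(?b + 8*n - 1) = bil n R (fst (pq n R k d)) k"
  proof -
    have "MM!(?b + 2*n*3 + 2*n - 1) = bil n R (fst (pq n R k d)) k"
      using dot_full[OF seg[of 3] M_zero nn] sum_bil[OF HP ln(2)] by simp
    moreover have "?b + 2*n*3 + 2*n - 1 = ?b + 8*n - 1" by simp
    ultimately show ?thesis by simp
  qed
  show "MM!(?b + 8*n) = bil n R (fst (pq n R k d)) ?l / bil n R (snd (pq n R (Suc k) d)) ?l"
    using blk_div[OF k kd] s0 s1 by simp
  show "MM!(?b + (8*n+1)) = bil n R (snd (pq n R (Suc k) d)) k / bil n R (fst (pq n R k d)) k"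
    using blk_div[OF k kd] s2 s3 by simp
qed

lemma inv:
  "k < n1 \<Longrightarrow> k + d < n \<Longrightarrow> i < n \<Longrightarrow>
     MM!(locP n1 n d k i) = fst (pq n R k d) i \<and> MM!(locQ n1 n d k i) = snd (pq n R k d) i"
proof (induction d arbitrary: k i)
  case 0
  then show ?case using blk_zero[of k i] by simp
next
  case (Suc d)
  have HP: "\<forall>i<n. MM!(locP n1 n d k i) = fst (pq n R k d) i" using Suc.IH[of k] Suc.prems by simp
  have HQ: "\<forall>i<n. MM!(qsrc n1 n d k i) = snd (pq n R (Suc k) d) i"
  proof (intro allI impI)
    fix i assume i: "i < n"
    show "MM!(qsrc n1 n d k i) = snd (pq n R (Suc k) d) i"
      by (rule qsrc_val) (use Suc.IH Suc.prems i in auto)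
  qed
  note c = blk_coef[OF Suc.prems(1,2) HP HQ]
  note u = blk_upd[OF Suc.prems(1,2,3)]
  show ?case unfolding u c using HP HQ Suc.prems(3) by (simp add: Let_def)
qed

lemma vvals:
  assumes k: "k < n1" and kd: "k + d < n"
  shows "MM!(bs n1 n d k + (14*n+1)) = bil n R (fst (pq n R k d)) k"
    "MM!(bs n1 n d k + (16*n+1)) = bil n R (snd (pq n R k d)) (k+d)"
proof -
  let ?b = "bs n1 n d k"
  have seg: "\<forall>w<2*n. MM!((?b + (8*n+2 + 2*n*j)) + w) = ev MM (dotins n ((?b + (8*n+2 + 2*n*j)) + w) w
     (if j=2 then locP n1 n d k else locQ n1 n d k) (if j = 2 then k else k + d))" if "j = 2 \<or> j = 3" for j
    using seg_hi[OF k kd that] by (simp add: add.assoc)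
  have ln: "k + d < n" "k < n" using kd by auto
  have HP: "\<forall>i<n. MM!(locP n1 n d k i) = fst (pq n R k d) i" using inv k kd by simp
  have HQ: "\<forall>i<n. MM!(locQ n1 n d k i) = snd (pq n R k d) i" using inv k kd by simp
  have "MM!(?b + (8*n+2 + 2*n*2) + 2*n - 1) = bil n R (fst (pq n R k d)) k"
    using dot_full[OF seg[of 2] M_zero nn] sum_bil[OF HP ln(2)] by simp
  moreover have "?b + (8*n+2 + 2*n*2) + 2*n - 1 = ?b + (14*n+1)" by simp
  ultimately show "MM!(?b + (14*n+1)) = bil n R (fst (pq n R k d)) k" by (simp add: ac_simps)
  have "MM!(?b + (8*n+2 + 2*n*3) + 2*n - 1) = bil n R (snd (pq n R k d)) (k+d)"
    using dot_full[OF seg[of 3] M_zero nn] sum_bil[OF HQ ln(1)] by simp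
  moreover have "?b + (8*n+2 + 2*n*3) + 2*n - 1 = ?b + (16*n+1)" by simp
  ultimately show "MM!(?b + (16*n+1)) = bil n R (snd (pq n R k d)) (k+d)" by (simp add: ac_simps)
qed

end


definition outf :: "nat \<Rightarrow> nat \<Rightarrow> quantity \<Rightarrow> nat" where
  "outf n1 n x = (case x of
      QA k l \<Rightarrow> bs n1 n (l-k) k + 8*n
    | QA' k l \<Rightarrow> bs n1 n (l-k) k + (8*n+1)
    | QV k l \<Rightarrow> bs n1 n (l-k) k + (16*n+1)
    | QV' k l \<Rightarrow> bs n1 n (l-k) k + (14*n+1)
    | QP k l i \<Rightarrow> locP n1 n (l-k) k i
    | QQ k l i \<Rightarrow> locQ n1 n (l-k) k i)"

lemma loc_bound:
  assumes "d < n" "k < n1" "ofs < LL n"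
  shows "bs n1 n d k + ofs < length (exec (prog n1 n) (input_of n R))"
  using blk_bound[OF assms] by (simp add: exec_len input_len len_prog bs_def)

lemma len_bound:
  assumes "1 \<le> n1" "1 \<le> n2"
  shows "length (prog n1 (n1*n2)) \<le> 20 * n1^3 * n2^2"
proof -
  define X where "X = n1^3 * n2^2"
  have X1: "1 \<le> X" using assms by (simp add: X_def)
  have a: "n1*n2*n1*(16*(n1*n2)) = 16 * X" by (simp add: X_def power2_eq_square power3_eq_cube)
  have "n1*n2*n1 \<le> n1*n2*n1 * (n1*n2)" using assms by simp
  also have "\<dots> = X" by (simp add: X_def power2_eq_square power3_eq_cube)
  finally have b: "n1*n2*n1 \<le> X" .
  have "length (prog n1 (n1*n2)) = 1 + n1*n2*n1*(16*(n1*n2)) + 2*(n1*n2*n1)"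
    by (simp add: len_prog LL_def algebra_simps)
  also have "\<dots> \<le> 20 * X" using a b X1 by linarith
  finally show ?thesis by (simp add: X_def)
qed

theorem theorem2:
  "\<exists>C::nat. \<forall>n1 n2. 1 \<le> n1 \<longrightarrow> 1 \<le> n2 \<longrightarrow>
     (let n = n1 * n2 in
      (\<forall>R. block_toeplitz n1 n2 R \<longrightarrow> posdef_mat n R \<longrightarrow>
         (\<forall>k l. k \<le> l \<longrightarrow> l < n \<longrightarrow>
            (\<forall>i<n. qvec n R k l i =
                    shiftU n (sec k n1) (qvec n R (k mod n1) (l - sec k n1)) i) \<and>
            vcoef n R k l = vcoef n R (k mod n1) (l - sec k n1))) \<and>
      (\<exists>(P :: instr list) (out :: quantity \<Rightarrow> nat).
         length P \<le> C * n1 ^ 3 * n2 ^ 2 \<and>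
         (\<forall>R. block_toeplitz n1 n2 R \<longrightarrow> posdef_mat n R \<longrightarrow>
            (\<forall>x \<in> required n1 n.
               out x < length (exec P (input_of n R)) \<and>
               exec P (input_of n R) ! out x = qval n R x))))"
proof (intro exI[of _ 20] allI impI)
  fix n1 n2 :: nat
  assume n1: "1 \<le> n1" and n2: "1 \<le> n2"
  define n where "n = n1 * n2"
  have nn: "1 \<le> n" using n1 n2 by (simp add: n_def)
  have A: "\<forall>R. block_toeplitz n1 n2 R \<longrightarrow> posdef_mat n R \<longrightarrow>
         (\<forall>k l. k \<le> l \<longrightarrow> l < n \<longrightarrow>
            (\<forall>i<n. qvec n R k l i =
                    shiftU n (sec k n1) (qvec n R (k mod n1) (l - sec k n1)) i) \<and>
            vcoef n R k l = vcoef n R (k mod n1) (l - sec k n1))"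
    using part1[OF _ n1] unfolding n_def by blast
  have B: "\<forall>R. block_toeplitz n1 n2 R \<longrightarrow> posdef_mat n R \<longrightarrow>
            (\<forall>x \<in> required n1 n.
               outf n1 n x < length (exec (prog n1 n) (input_of n R)) \<and>
               exec (prog n1 n) (input_of n R) ! outf n1 n x = qval n R x)"
  proof (intro allI impI ballI)
    fix R x
    assume bt: "block_toeplitz n1 n2 R" and "posdef_mat n R" and x: "x \<in> required n1 n"
    have hS: "R (i+n1) (j+n1) = R i j" if "i + n1 < n" "j + n1 < n" for i j
      using bt_shift1[OF bt n1] that by (simp add: n_def)
    interpret prg n1 n R using n1 nn hS by unfold_locales auto
    have Lb: "8*n+3+2*i < LL n" "10*n+3+2*i < LL n" if "i < n" for i
      using that by (simp_all add: LL_def)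
    have Lc: "8*n < LL n" "8*n+1 < LL n" "14*n+1 < LL n" "16*n+1 < LL n" by (simp_all add: LL_def)
    show "outf n1 n x < length MM \<and> MM ! outf n1 n x = qval n R x"
      using x unfolding required_def
    proof (elim UnE CollectE exE conjE)
      fix k l assume h: "x = QA k l" "k < n1" "k < l" "l < n"
      obtain d where d: "l - k = Suc d" using h by (metis Suc_diff_Suc)
      have kd: "k + Suc d < n" "l = k + Suc d" using h d by auto
      have HP: "\<forall>i<n. MM!(locP n1 n d k i) = fst (pq n R k d) i" using inv h kd by simp
      have HQ: "\<forall>i<n. MM!(qsrc n1 n d k i) = snd (pq n R (Suc k) d) i"
        using qsrc_val[OF inv] h kd by blast
      have e1: "l - 1 - k = d" "l - Suc k = d" using kd by auto
      show ?thesis unfolding h(1) outf_def d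
        using blk_coef(1)[OF h(2) kd(1) HP HQ] loc_bound[of "Suc d" n k n1 "8*n"] Lc kd h
        by (simp add: acoef_def pvec_def vcoef_def qvec_def e1)
    next
      fix k l assume h: "x = QA' k l" "k < n1" "k < l" "l < n"
      obtain d where d: "l - k = Suc d" using h by (metis Suc_diff_Suc)
      have kd: "k + Suc d < n" "l = k + Suc d" using h d by auto
      have HP: "\<forall>i<n. MM!(locP n1 n d k i) = fst (pq n R k d) i" using inv h kd by simp
      have HQ: "\<forall>i<n. MM!(qsrc n1 n d k i) = snd (pq n R (Suc k) d) i"
        using qsrc_val[OF inv] h kd by blast
      have e1: "l - 1 - k = d" "l - Suc k = d" using kd by auto
      show ?thesis unfolding h(1) outf_def d
        using blk_coef(2)[OF h(2) kd(1) HP HQ] loc_bound[of "Suc d" n k n1 "8*n+1"] Lc kd h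
        by (simp add: acoef'_def pvec_def vcoef'_def qvec_def e1)
    next
      fix k l assume h: "x = QV k l" "k < n1" "k \<le> l" "l < n"
      have kd: "k + (l - k) < n" "k + (l-k) = l" using h by auto
      show ?thesis unfolding h(1) outf_def
        using vvals(2)[OF h(2) kd(1)] loc_bound[of "l-k" n k n1 "16*n+1"] Lc kd h
        by (simp add: vcoef_def qvec_def)
    next
      fix k l assume h: "x = QV' k l" "k < n1" "k \<le> l" "l < n"
      have kd: "k + (l - k) < n" "k + (l-k) = l" using h by auto
      show ?thesis unfolding h(1) outf_def
        using vvals(1)[OF h(2) kd(1)] loc_bound[of "l-k" n k n1 "14*n+1"] Lc kd h
        by (simp add: vcoef'_def pvec_def)
    next
      fix k l i assume h: "x = QP k l i" "k < n1" "k \<le> l" "l < n" "i < n"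
      have kd: "k + (l - k) < n" using h by auto
      have "locP n1 n (l-k) k i = bs n1 n (l-k) k + (8*n+3+2*i)" by (simp add: locP_def)
      then show ?thesis unfolding h(1) outf_def
        using inv[OF h(2) kd h(5)] loc_bound[of "l-k" n k n1 "8*n+3+2*i"] Lb[OF h(5)] kd h
        by (simp add: pvec_def)
    next
      fix k l i assume h: "x = QQ k l i" "k < n1" "k \<le> l" "l < n" "i < n"
      have kd: "k + (l - k) < n" using h by auto
      have "locQ n1 n (l-k) k i = bs n1 n (l-k) k + (10*n+3+2*i)" by (simp add: locQ_def)
      then show ?thesis unfolding h(1) outf_def
        using inv[OF h(2) kd h(5)] loc_bound[of "l-k" n k n1 "10*n+3+2*i"] Lb[OF h(5)] kd h
        by (simp add: qvec_def)
    qed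
  qed
  have Ln: "length (prog n1 n) \<le> 20 * n1 ^ 3 * n2 ^ 2" using len_bound[OF n1 n2] by (simp add: n_def)
  show "let n = n1 * n2 in
      (\<forall>R. block_toeplitz n1 n2 R \<longrightarrow> posdef_mat n R \<longrightarrow>
         (\<forall>k l. k \<le> l \<longrightarrow> l < n \<longrightarrow>
            (\<forall>i<n. qvec n R k l i =
                    shiftU n (sec k n1) (qvec n R (k mod n1) (l - sec k n1)) i) \<and>
            vcoef n R k l = vcoef n R (k mod n1) (l - sec k n1))) \<and>
      (\<exists>(P :: instr list) (out :: quantity \<Rightarrow> nat).
         length P \<le> 20 * n1 ^ 3 * n2 ^ 2 \<and>
         (\<forall>R. block_toeplitz n1 n2 R \<longrightarrow> posdef_mat n R \<longrightarrow>
            (\<forall>x \<in> required n1 n.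
               out x < length (exec P (input_of n R)) \<and>
               exec P (input_of n R) ! out x = qval n R x)))"
    unfolding Let_def n_def[symmetric] using A B Ln by blast
qed

end
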